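(* Assume the Setting below. Let $\gamma_1,\dots,\gamma_c\in\mathbb R^d$ be server vectors with fixed vectors $\mathbb E\gamma_1,\dots,\mathbb E\gamma_c$, and suppose that for every $i\in\mathcal H$ there is a probability vector $(p_{i1},\dots,p_{ic})$ with $\mathbb Eg_i=\sum_{z=1}^cp_{iz}\mathbb E\gamma_z$. Let $\hat{\mathcal P}_0$ be an affine subspace containing $\gamma_1,\dots,\gamma_c$, and let $\hat{\mathcal P}$ be any affine subspace with $\ell_t(\hat{\mathcal P})\le\ell_t(\hat{\mathcal P}_0)$. Then $$\ell_t(\hat{\mathcal P})\le\frac{2(n-f)}{|\mathcal H|}\Big(\sum_{i\in\mathcal H}\|g_i-\mathbb Eg_i\|_2^2+\sum_{i\in\mathcal H}\sum_{z=1}^cp_{iz}\|\mathbb E\gamma_z-\gamma_z\|_2^2\Big).$$ Consequently, if $\mathbb E\|g_i-\mathbb Eg_i\|_2^2\le\epsilon^2$ for $i\in\mathcal H$ and $\mathbb E\|\gamma_z-\mathbb E\gamma_z\|_2^2\le\epsilon_s^2$ for all $z$, then $\mathbb E\,\ell_t(\hat{\mathcal P})\le2(n-f)(\epsilon^2+\epsilon_s^2)$.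
   Context: Setting: let $n,f,c,d$ be positive integers with $c\ge2$, $d\ge c$, $n-2f\ge1$. The index set $\{1,\dots,n\}$ is partitioned as $\mathcal H\sqcup\mathcal B$ (honest and Byzantine clients) with $|\mathcal B|\le f$. Each client $i$ has a vector $g_i\in\mathbb R^d$; for $i\in\mathcal H$, $\mathbb Eg_i\in\mathbb R^d$ denotes a fixed vector (the expectation of $g_i$), and $\mathbb E\mu=\frac1{|\mathcal H|}\sum_{i\in\mathcal H}\mathbb Eg_i$. A $k$-dimensional affine subspace is $\mathcal P=\{U\lambda+m:\lambda\in\mathbb R^k\}$ with $U\in\mathbb R^{d\times k}$ having orthonormal columns and $m\in\mathbb R^d$; its orthogonal projection is $\Pi_{\mathcal P}(w)=UU^\top(w-m)+m$. The trimmed reconstruction loss of an affine subspace $\mathcal P$ is $\ell_t(\mathcal P)=\min_{S\subseteq\{1,\dots,n\},\,|S|=n-f}\sum_{i\in S}\|g_i-\Pi_{\mathcal P}(g_i)\|_2^2$. (In the algorithm, $\hat{\mathcal P}_0$ is the affine subspace fitted to the server vectors by truncated SVD, and $\hat{\mathcal P}$ results from alternating minimization, which does not increase $\ell_t$.) *)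

theory Defs
  imports "HOL-Analysis.Analysis" "HOL-Probability.Probability"
begin

text \<open>An affine subspace P = {U lambda + m} is represented by the list U of the
  columns of the d x k matrix U (k = length U) together with the offset m.\<close>

definition orthonormal_cols :: "'a::euclidean_space list \<Rightarrow> bool" where
  "orthonormal_cols U \<longleftrightarrow>
     (\<forall>j<length U. \<forall>l<length U. U ! j \<bullet> U ! l = (if j = l then 1 else 0))"

definition aff_subspace :: "'a::euclidean_space list \<Rightarrow> 'a \<Rightarrow> 'a set" where
  "aff_subspace U m = {(\<Sum>j<length U. lam j *\<^sub>R U ! j) + m | lam :: nat \<Rightarrow> real. True}"

definition aff_proj :: "'a::euclidean_space list \<Rightarrow> 'a \<Rightarrow> 'a \<Rightarrow> 'a" where
  "aff_proj U m w = (\<Sum>j<length U. ((U ! j) \<bullet> (w - m)) *\<^sub>R U ! j) + m"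

definition trimmed_loss :: "nat \<Rightarrow> nat \<Rightarrow> (nat \<Rightarrow> 'a::euclidean_space) \<Rightarrow> 'a list \<Rightarrow> 'a \<Rightarrow> real" where
  "trimmed_loss n f g U m =
     Min {(\<Sum>i\<in>S. (norm (g i - aff_proj U m (g i)))\<^sup>2) | S. S \<subseteq> {1..n} \<and> card S = n - f}"

end

theory Submission
  imports Defs
begin

lemma proj_le:
  fixes U :: "'a::euclidean_space list"
  assumes on: "orthonormal_cols U" and y: "y \<in> aff_subspace U m"
  shows "norm (w - aff_proj U m w) \<le> norm (w - y)"
proof -
  obtain lam where yl: "y = (\<Sum>j<length U. lam j *\<^sub>R U ! j) + m"
    using y unfolding aff_subspace_def by blast
  define v where "v = w - m"
  define P where "P = (\<Sum>j<length U. ((U ! j) \<bullet> v) *\<^sub>R U ! j)"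
  define Q where "Q = (\<Sum>j<length U. (((U ! j) \<bullet> v) - lam j) *\<^sub>R U ! j)"
  have e1: "w - aff_proj U m w = v - P" unfolding aff_proj_def v_def P_def by simp
  have eQ: "Q = P - (\<Sum>j<length U. lam j *\<^sub>R U ! j)"
    unfolding Q_def P_def by (simp add: scaleR_diff_left sum_subtractf)
  have e2: "w - y = (v - P) + Q"
    unfolding eQ yl v_def by simp
  have orth: "(v - P) \<bullet> (U ! l) = 0" if "l < length U" for l
  proof -
    have "P \<bullet> (U ! l) = (\<Sum>j<length U. ((U ! j) \<bullet> v) * (if j = l then 1 else 0))"
      unfolding P_def inner_sum_left using on that by (simp add: orthonormal_cols_def)
    also have "\<dots> = U ! l \<bullet> v" using that by (simp add: if_distrib sum.delta cong: if_cong)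
    finally show ?thesis by (simp add: inner_diff_left inner_commute)
  qed
  have "(v - P) \<bullet> Q = 0" unfolding Q_def inner_sum_right using orth by simp
  hence "(norm (w - y))\<^sup>2 = (norm (v - P))\<^sup>2 + (norm Q)\<^sup>2"
    unfolding e2 by (simp add: norm_add_Pythagorean orthogonal_def)
  hence "(norm (v - P))\<^sup>2 \<le> (norm (w - y))\<^sup>2" by simp
  thus ?thesis unfolding e1 using power2_le_imp_le by fastforce
qed

lemma aff_comb:
  fixes U :: "'a::euclidean_space list"
  assumes fin: "finite Z" and mem: "\<And>z. z \<in> Z \<Longrightarrow> x z \<in> aff_subspace U m"
    and s: "(\<Sum>z\<in>Z. a z) = 1"
  shows "(\<Sum>z\<in>Z. a z *\<^sub>R x z) \<in> aff_subspace U m"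
proof -
  have "\<forall>z\<in>Z. \<exists>lam. x z = (\<Sum>j<length U. lam j *\<^sub>R U ! j) + m"
    using mem unfolding aff_subspace_def by blast
  then obtain L where L: "\<And>z. z \<in> Z \<Longrightarrow> x z = (\<Sum>j<length U. L z j *\<^sub>R U ! j) + m"
    by metis
  have "(\<Sum>z\<in>Z. a z *\<^sub>R x z) = (\<Sum>z\<in>Z. a z *\<^sub>R ((\<Sum>j<length U. L z j *\<^sub>R U ! j) + m))"
    using L by simp
  also have "\<dots> = (\<Sum>z\<in>Z. (\<Sum>j<length U. (a z * L z j) *\<^sub>R U ! j)) + (\<Sum>z\<in>Z. a z) *\<^sub>R m"
    by (simp add: scaleR_add_right sum.distrib scaleR_sum_right scaleR_sum_left)
  also have "\<dots> = (\<Sum>j<length U. (\<Sum>z\<in>Z. a z * L z j) *\<^sub>R U ! j) + m"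
    using s by (simp add: sum.swap[of _ Z] scaleR_sum_left)
  finally show ?thesis unfolding aff_subspace_def
    by (intro CollectI exI[where x="\<lambda>j. \<Sum>z\<in>Z. a z * L z j"]) simp
qed

lemma jensen_norm2:
  fixes x :: "nat \<Rightarrow> 'a::real_normed_vector"
  assumes "finite Z" "Z \<noteq> {}" "(\<Sum>z\<in>Z. a z) = 1" "\<And>z. z \<in> Z \<Longrightarrow> a z \<ge> 0"
  shows "(norm (\<Sum>z\<in>Z. a z *\<^sub>R x z))\<^sup>2 \<le> (\<Sum>z\<in>Z. a z * (norm (x z))\<^sup>2)"
proof -
  have "norm (\<Sum>z\<in>Z. a z *\<^sub>R x z) \<le> (\<Sum>z\<in>Z. a z *\<^sub>R norm (x z))"
    by (rule order_trans[OF norm_sum]) (simp add: assms(4))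
  hence "(norm (\<Sum>z\<in>Z. a z *\<^sub>R x z))\<^sup>2 \<le> (\<Sum>z\<in>Z. a z *\<^sub>R norm (x z))\<^sup>2"
    by (simp add: power_mono)
  also have "\<dots> \<le> (\<Sum>z\<in>Z. a z * (norm (x z))\<^sup>2)"
    using convex_on_sum[OF assms(1,2) convex_power2 assms(3), of "\<lambda>z. norm (x z)"] assms(4) by simp
  finally show ?thesis .
qed

lemma avg_subset:
  fixes a :: "nat \<Rightarrow> real"
  shows "finite H \<Longrightarrow> card H = N \<Longrightarrow> k \<le> N \<Longrightarrow>
    \<exists>S\<subseteq>H. card S = k \<and> (\<Sum>i\<in>S. a i) \<le> real k / real N * (\<Sum>i\<in>H. a i)"
proof (induction N arbitrary: H)
  case 0 thus ?case by auto
next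
  case (Suc N)
  show ?case
  proof (cases "k = Suc N")
    case True thus ?thesis using Suc.prems by (intro exI[of _ H]) auto
  next
    case False
    hence kN: "k \<le> N" using Suc.prems by simp
    have ne: "H \<noteq> {}" using Suc.prems by auto
    obtain x where x: "x \<in> H" "\<And>y. y \<in> H \<Longrightarrow> a y \<le> a x"
      using Max_in[of "a ` H"] Max_ge[of "a ` H"] Suc.prems(1) ne by fastforce
    have cH: "card (H - {x}) = N" using Suc.prems x by simp
    obtain S where S: "S \<subseteq> H - {x}" "card S = k" "(\<Sum>i\<in>S. a i) \<le> real k / real N * (\<Sum>i\<in>H - {x}. a i)"
      using Suc.IH[OF _ cH kN] Suc.prems by auto
    have sH: "(\<Sum>i\<in>H. a i) = a x + (\<Sum>i\<in>H - {x}. a i)"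
      using Suc.prems(1) x(1) by (simp add: sum.remove)
    have "(\<Sum>i\<in>H. a i) \<le> real (Suc N) * a x"
      using sum_bounded_above[of H a "a x"] x Suc.prems by simp
    hence avg: "real (Suc N) * (\<Sum>i\<in>H - {x}. a i) \<le> real N * (\<Sum>i\<in>H. a i)"
      using sH by (simp add: algebra_simps)
    show ?thesis
    proof (cases "N = 0")
      case True thus ?thesis using S kN by (intro exI[of _ S]) auto
    next
      case N0: False
      have "real k / real N * (\<Sum>i\<in>H - {x}. a i) \<le> real k / real (Suc N) * (\<Sum>i\<in>H. a i)"
      proof -
        have "real k / real N * (\<Sum>i\<in>H - {x}. a i) = real k / (real N * real (Suc N)) * (real (Suc N) * (\<Sum>i\<in>H - {x}. a i))"
          using N0 by (simp add: divide_simps del: of_nat_Suc)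
        also have "\<dots> \<le> real k / (real N * real (Suc N)) * (real N * (\<Sum>i\<in>H. a i))"
          by (rule mult_left_mono[OF avg]) simp
        also have "\<dots> = real k / real (Suc N) * (\<Sum>i\<in>H. a i)" using N0 by (simp add: divide_simps del: of_nat_Suc)
        finally show ?thesis .
      qed
      thus ?thesis using S by (intro exI[of _ S]) auto
    qed
  qed
qed

lemma sq_add_le: "(norm (a + b :: 'a::real_normed_vector))\<^sup>2 \<le> 2 * (norm a)\<^sup>2 + 2 * (norm b)\<^sup>2"
proof -
  have "norm (a + b) \<le> norm a + norm b" by (rule norm_triangle_ineq)
  hence "(norm (a + b))\<^sup>2 \<le> (norm a + norm b)\<^sup>2" by (simp add: power_mono)
  also have "\<dots> \<le> 2 * (norm a)\<^sup>2 + 2 * (norm b)\<^sup>2"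
    using zero_le_power2[of "norm a - norm b"] by (simp add: power2_eq_square algebra_simps)
  finally show ?thesis .
qed

lemma det_bound:
  fixes g :: "nat \<Rightarrow> 'a::euclidean_space" and c :: nat and p :: "nat \<Rightarrow> nat \<Rightarrow> real"
  assumes nf: "n \<ge> 2 * f + 1"
    and Hs: "H \<subseteq> {1..n}" and cH: "card ({1..n} - H) \<le> f" and c1: "c \<ge> 1"
    and p_nonneg: "\<And>i z. i \<in> H \<Longrightarrow> z \<in> {1..c} \<Longrightarrow> p i z \<ge> 0"
    and p_sum: "\<And>i. i \<in> H \<Longrightarrow> (\<Sum>z=1..c. p i z) = 1"
    and Eg_mix: "\<And>i. i \<in> H \<Longrightarrow> Eg i = (\<Sum>z=1..c. p i z *\<^sub>R Egam z)"
    and on0: "orthonormal_cols U0"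
    and cont: "\<And>z. z \<in> {1..c} \<Longrightarrow> gam z \<in> aff_subspace U0 m0"
    and better: "trimmed_loss n f g U m \<le> trimmed_loss n f g U0 m0"
  shows "trimmed_loss n f g U m
              \<le> 2 * real (n - f) / real (card H) *
                 ((\<Sum>i\<in>H. (norm (g i - Eg i))\<^sup>2)
                  + (\<Sum>i\<in>H. \<Sum>z=1..c. p i z * (norm (Egam z - gam z))\<^sup>2))"
proof -
  have finH: "finite H" using Hs finite_subset by blast
  have "card ({1..n} - H) = n - card H" using Hs finH by (simp add: card_Diff_subset)
  hence cardH: "n - f \<le> card H" using cH Hs card_mono[of "{1..n}" H] by simp
  define d where "d i = (norm (g i - aff_proj U0 m0 (g i)))\<^sup>2" for i
  define B where "B i = 2 * (norm (g i - Eg i))\<^sup>2 + 2 * (\<Sum>z=1..c. p i z * (norm (Egam z - gam z))\<^sup>2)" for i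
  have dB: "d i \<le> B i" if i: "i \<in> H" for i
  proof -
    define y where "y = (\<Sum>z=1..c. p i z *\<^sub>R gam z)"
    have ymem: "y \<in> aff_subspace U0 m0" unfolding y_def
      by (rule aff_comb) (use cont p_sum i in auto)
    have "norm (g i - aff_proj U0 m0 (g i)) \<le> norm (g i - y)" by (rule proj_le[OF on0 ymem])
    hence "d i \<le> (norm (g i - y))\<^sup>2" unfolding d_def by (simp add: power_mono)
    also have "g i - y = (g i - Eg i) + (\<Sum>z=1..c. p i z *\<^sub>R (Egam z - gam z))"
      using Eg_mix[OF i] unfolding y_def by (simp add: scaleR_diff_right sum_subtractf)
    also have "(norm \<dots>)\<^sup>2 \<le> 2 * (norm (g i - Eg i))\<^sup>2 + 2 * (norm (\<Sum>z=1..c. p i z *\<^sub>R (Egam z - gam z)))\<^sup>2"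
      by (rule sq_add_le)
    also have "(norm (\<Sum>z=1..c. p i z *\<^sub>R (Egam z - gam z)))\<^sup>2 \<le> (\<Sum>z=1..c. p i z * (norm (Egam z - gam z))\<^sup>2)"
      by (rule jensen_norm2) (use c1 p_sum p_nonneg i in auto)
    finally show ?thesis unfolding B_def by simp
  qed
  obtain S where S: "S \<subseteq> H" "card S = n - f" "(\<Sum>i\<in>S. d i) \<le> real (n - f) / real (card H) * (\<Sum>i\<in>H. d i)"
    using avg_subset[OF finH refl cardH, of d] by blast
  have fin: "finite {(\<Sum>i\<in>S. (norm (g i - aff_proj U0 m0 (g i)))\<^sup>2) | S. S \<subseteq> {1..n} \<and> card S = n - f}"
  proof -
    have "{(\<Sum>i\<in>S. (norm (g i - aff_proj U0 m0 (g i)))\<^sup>2) | S. S \<subseteq> {1..n} \<and> card S = n - f}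
       \<subseteq> (\<lambda>S. \<Sum>i\<in>S. (norm (g i - aff_proj U0 m0 (g i)))\<^sup>2) ` Pow {1..n}" by auto
    thus ?thesis by (rule finite_subset) simp
  qed
  have "trimmed_loss n f g U0 m0 \<le> (\<Sum>i\<in>S. d i)"
    unfolding trimmed_loss_def d_def
    by (rule Min_le[OF fin]) (use S Hs in blast)
  also have "\<dots> \<le> real (n - f) / real (card H) * (\<Sum>i\<in>H. d i)" by (rule S(3))
  also have "\<dots> \<le> real (n - f) / real (card H) * (\<Sum>i\<in>H. B i)"
    by (rule mult_left_mono) (auto intro: sum_mono dB)
  also have "\<dots> = 2 * real (n - f) / real (card H) *
                 ((\<Sum>i\<in>H. (norm (g i - Eg i))\<^sup>2)
                  + (\<Sum>i\<in>H. \<Sum>z=1..c. p i z * (norm (Egam z - gam z))\<^sup>2))"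
    unfolding B_def by (simp add: sum.distrib sum_distrib_left[symmetric] algebra_simps)
  finally show ?thesis using better by linarith
qed

theorem mainTheorem7:
  fixes n f c :: nat
    and H :: "nat set"
    and M :: "'w measure"
    and g :: "'w \<Rightarrow> nat \<Rightarrow> 'a::euclidean_space"
    and Eg :: "nat \<Rightarrow> 'a"
    and gam :: "'w \<Rightarrow> nat \<Rightarrow> 'a"
    and Egam :: "nat \<Rightarrow> 'a"
    and p :: "nat \<Rightarrow> nat \<Rightarrow> real"
    and U0 U :: "'w \<Rightarrow> 'a list"
    and m0 m :: "'w \<Rightarrow> 'a"
    and eps eps_s :: real
  assumes "n > 0" "f > 0" "c \<ge> 2" "DIM('a) \<ge> c" "n \<ge> 2 * f + 1"
    and "H \<subseteq> {1..n}" "card ({1..n} - H) \<le> f"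
    and p_nonneg: "\<And>i z. i \<in> H \<Longrightarrow> z \<in> {1..c} \<Longrightarrow> p i z \<ge> 0"
    and p_sum: "\<And>i. i \<in> H \<Longrightarrow> (\<Sum>z=1..c. p i z) = 1"
    and Eg_mix: "\<And>i. i \<in> H \<Longrightarrow> Eg i = (\<Sum>z=1..c. p i z *\<^sub>R Egam z)"
    and P0_on: "\<And>\<omega>. \<omega> \<in> space M \<Longrightarrow> orthonormal_cols (U0 \<omega>)"
    and P0_contains: "\<And>\<omega> z. \<omega> \<in> space M \<Longrightarrow> z \<in> {1..c} \<Longrightarrow>
                        gam \<omega> z \<in> aff_subspace (U0 \<omega>) (m0 \<omega>)"
    and P_on: "\<And>\<omega>. \<omega> \<in> space M \<Longrightarrow> orthonormal_cols (U \<omega>)"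
    and P_better: "\<And>\<omega>. \<omega> \<in> space M \<Longrightarrow>
        trimmed_loss n f (g \<omega>) (U \<omega>) (m \<omega>) \<le> trimmed_loss n f (g \<omega>) (U0 \<omega>) (m0 \<omega>)"
  shows "(\<forall>\<omega>\<in>space M.
            trimmed_loss n f (g \<omega>) (U \<omega>) (m \<omega>)
              \<le> 2 * real (n - f) / real (card H) *
                 ((\<Sum>i\<in>H. (norm (g \<omega> i - Eg i))\<^sup>2)
                  + (\<Sum>i\<in>H. \<Sum>z=1..c. p i z * (norm (Egam z - gam \<omega> z))\<^sup>2)))
       \<and> ((prob_space M
            \<and> (\<forall>i\<in>H. (\<lambda>\<omega>. g \<omega> i) \<in> borel_measurable M)
            \<and> (\<forall>z\<in>{1..c}. (\<lambda>\<omega>. gam \<omega> z) \<in> borel_measurable M)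
            \<and> (\<forall>i\<in>H. (\<integral>\<^sup>+ \<omega>. ennreal ((norm (g \<omega> i - Eg i))\<^sup>2) \<partial>M) \<le> ennreal (eps\<^sup>2))
            \<and> (\<forall>z\<in>{1..c}. (\<integral>\<^sup>+ \<omega>. ennreal ((norm (gam \<omega> z - Egam z))\<^sup>2) \<partial>M)
                               \<le> ennreal (eps_s\<^sup>2)))
          \<longrightarrow> (\<integral>\<^sup>+ \<omega>. ennreal (trimmed_loss n f (g \<omega>) (U \<omega>) (m \<omega>)) \<partial>M)
                \<le> ennreal (2 * real (n - f) * (eps\<^sup>2 + eps_s\<^sup>2)))"
proof (intro conjI impI)
  have c1: "c \<ge> 1" using assms(3) by simp
  show part1: "\<forall>\<omega>\<in>space M.
            trimmed_loss n f (g \<omega>) (U \<omega>) (m \<omega>)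
              \<le> 2 * real (n - f) / real (card H) *
                 ((\<Sum>i\<in>H. (norm (g \<omega> i - Eg i))\<^sup>2)
                  + (\<Sum>i\<in>H. \<Sum>z=1..c. p i z * (norm (Egam z - gam \<omega> z))\<^sup>2))"
  proof
    fix \<omega> assume w: "\<omega> \<in> space M"
    show "trimmed_loss n f (g \<omega>) (U \<omega>) (m \<omega>)
              \<le> 2 * real (n - f) / real (card H) *
                 ((\<Sum>i\<in>H. (norm (g \<omega> i - Eg i))\<^sup>2)
                  + (\<Sum>i\<in>H. \<Sum>z=1..c. p i z * (norm (Egam z - gam \<omega> z))\<^sup>2))"
      by (rule det_bound[OF assms(5,6,7) c1 p_nonneg p_sum Eg_mix P0_on[OF w] P0_contains[OF w] P_better[OF w]])
  qed
  assume A: "prob_space M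
            \<and> (\<forall>i\<in>H. (\<lambda>\<omega>. g \<omega> i) \<in> borel_measurable M)
            \<and> (\<forall>z\<in>{1..c}. (\<lambda>\<omega>. gam \<omega> z) \<in> borel_measurable M)
            \<and> (\<forall>i\<in>H. (\<integral>\<^sup>+ \<omega>. ennreal ((norm (g \<omega> i - Eg i))\<^sup>2) \<partial>M) \<le> ennreal (eps\<^sup>2))
            \<and> (\<forall>z\<in>{1..c}. (\<integral>\<^sup>+ \<omega>. ennreal ((norm (gam \<omega> z - Egam z))\<^sup>2) \<partial>M)
                               \<le> ennreal (eps_s\<^sup>2))"
  have Hs: "H \<subseteq> {1..n}" by fact
  have finH: "finite H" using Hs finite_subset by blast
  have "card ({1..n} - H) = n - card H" using Hs finH by (simp add: card_Diff_subset)
  hence "n - f \<le> card H" using assms(7) Hs card_mono[of "{1..n}" H] by simp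
  hence cHpos: "card H > 0" using assms(5) by linarith
  define K where "K = 2 * real (n - f) / real (card H)"
  have K0: "K \<ge> 0" unfolding K_def by simp
  define A where "A i \<omega> = (norm (g \<omega> i - Eg i))\<^sup>2" for i \<omega>
  define B where "B z \<omega> = (norm (gam \<omega> z - Egam z))\<^sup>2" for z \<omega>
  have mA: "(\<lambda>\<omega>. ennreal (A i \<omega>)) \<in> borel_measurable M" if "i \<in> H" for i
  proof -
    have gm[measurable]: "(\<lambda>\<omega>. g \<omega> i) \<in> borel_measurable M" using A that by blast
    show ?thesis unfolding A_def by measurable
  qed
  have mB: "(\<lambda>\<omega>. ennreal (B z \<omega>)) \<in> borel_measurable M" if "z \<in> {1..c}" for z
  proof -
    have gm[measurable]: "(\<lambda>\<omega>. gam \<omega> z) \<in> borel_measurable M" using A that by blast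
    show ?thesis unfolding B_def by measurable
  qed
  have pt: "ennreal (trimmed_loss n f (g \<omega>) (U \<omega>) (m \<omega>))
       \<le> ennreal K * ((\<Sum>i\<in>H. ennreal (A i \<omega>)) + (\<Sum>i\<in>H. \<Sum>z=1..c. ennreal (p i z) * ennreal (B z \<omega>)))"
    if w: "\<omega> \<in> space M" for \<omega>
  proof -
    have e: "ennreal K * ((\<Sum>i\<in>H. ennreal (A i \<omega>)) + (\<Sum>i\<in>H. \<Sum>z=1..c. ennreal (p i z) * ennreal (B z \<omega>)))
      = ennreal (K * ((\<Sum>i\<in>H. A i \<omega>) + (\<Sum>i\<in>H. \<Sum>z=1..c. p i z * B z \<omega>)))"
    proof -
      have "(\<Sum>i\<in>H. \<Sum>z=1..c. ennreal (p i z) * ennreal (B z \<omega>)) = (\<Sum>i\<in>H. \<Sum>z=1..c. ennreal (p i z * B z \<omega>))"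
        by (intro sum.cong refl) (simp add: ennreal_mult B_def p_nonneg)
      also have "\<dots> = (\<Sum>i\<in>H. ennreal (\<Sum>z=1..c. p i z * B z \<omega>))"
        by (intro sum.cong refl sum_ennreal) (simp add: B_def p_nonneg)
      also have "\<dots> = ennreal (\<Sum>i\<in>H. \<Sum>z=1..c. p i z * B z \<omega>)"
        by (intro sum_ennreal sum_nonneg mult_nonneg_nonneg) (auto simp: B_def p_nonneg)
      finally have e2: "(\<Sum>i\<in>H. \<Sum>z=1..c. ennreal (p i z) * ennreal (B z \<omega>)) = ennreal (\<Sum>i\<in>H. \<Sum>z=1..c. p i z * B z \<omega>)" .
      have a0: "(\<Sum>i\<in>H. A i \<omega>) \<ge> 0" by (intro sum_nonneg) (simp add: A_def)
      have b0: "(\<Sum>i\<in>H. \<Sum>z=1..c. p i z * B z \<omega>) \<ge> 0"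
        by (intro sum_nonneg mult_nonneg_nonneg) (auto simp: B_def p_nonneg)
      have e1: "(\<Sum>i\<in>H. ennreal (A i \<omega>)) = ennreal (\<Sum>i\<in>H. A i \<omega>)"
        by (intro sum_ennreal) (simp add: A_def)
      show ?thesis unfolding e1 e2
        using a0 b0 K0 by (simp add: ennreal_plus[symmetric] ennreal_mult[symmetric] del: ennreal_plus)
    qed
    show ?thesis unfolding e
      using bspec[OF part1 w] unfolding K_def A_def B_def
      by (intro ennreal_leI) (simp add: norm_minus_commute)
  qed
  have "(\<integral>\<^sup>+ \<omega>. ennreal (trimmed_loss n f (g \<omega>) (U \<omega>) (m \<omega>)) \<partial>M)
     \<le> (\<integral>\<^sup>+ \<omega>. ennreal K * ((\<Sum>i\<in>H. ennreal (A i \<omega>)) + (\<Sum>i\<in>H. \<Sum>z=1..c. ennreal (p i z) * ennreal (B z \<omega>))) \<partial>M)"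
    by (rule nn_integral_mono) (rule pt)
  also have "\<dots> = ennreal K * ((\<Sum>i\<in>H. \<integral>\<^sup>+ \<omega>. ennreal (A i \<omega>) \<partial>M) + (\<Sum>i\<in>H. \<Sum>z=1..c. ennreal (p i z) * \<integral>\<^sup>+ \<omega>. ennreal (B z \<omega>) \<partial>M))"
  proof -
    have inner: "(\<integral>\<^sup>+ \<omega>. (\<Sum>z=1..c. ennreal (p i z) * ennreal (B z \<omega>)) \<partial>M)
       = (\<Sum>z=1..c. ennreal (p i z) * \<integral>\<^sup>+ \<omega>. ennreal (B z \<omega>) \<partial>M)" for i
    proof -
      have "(\<integral>\<^sup>+ \<omega>. (\<Sum>z=1..c. ennreal (p i z) * ennreal (B z \<omega>)) \<partial>M)
         = (\<Sum>z=1..c. \<integral>\<^sup>+ \<omega>. ennreal (p i z) * ennreal (B z \<omega>) \<partial>M)"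
        by (rule nn_integral_sum) (use mB in auto)
      also have "\<dots> = (\<Sum>z=1..c. ennreal (p i z) * \<integral>\<^sup>+ \<omega>. ennreal (B z \<omega>) \<partial>M)"
        by (intro sum.cong refl nn_integral_cmult) (use mB in auto)
      finally show ?thesis .
    qed
    show ?thesis
      using mA mB
      by (simp add: nn_integral_cmult nn_integral_add nn_integral_sum borel_measurable_sum inner[simplified])
  qed
  also have "\<dots> \<le> ennreal K * ((\<Sum>i\<in>H. ennreal (eps\<^sup>2)) + (\<Sum>i\<in>H. \<Sum>z=1..c. ennreal (p i z) * ennreal (eps_s\<^sup>2)))"
    using A unfolding A_def B_def
    by (intro mult_left_mono add_mono sum_mono) auto
  also have "\<dots> = ennreal (2 * real (n - f) * (eps\<^sup>2 + eps_s\<^sup>2))"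
  proof -
    have "(\<Sum>i\<in>H. \<Sum>z=1..c. ennreal (p i z) * ennreal (eps_s\<^sup>2)) = (\<Sum>i\<in>H. ennreal (eps_s\<^sup>2))"
    proof (intro sum.cong refl)
      fix i assume i: "i \<in> H"
      have "(\<Sum>z=1..c. ennreal (p i z) * ennreal (eps_s\<^sup>2)) = (\<Sum>z=1..c. ennreal (p i z)) * ennreal (eps_s\<^sup>2)"
        by (simp add: sum_distrib_right)
      also have "(\<Sum>z=1..c. ennreal (p i z)) = 1" proof -
        have "(\<Sum>z=1..c. ennreal (p i z)) = ennreal (\<Sum>z=1..c. p i z)"
          by (rule sum_ennreal) (use p_nonneg[OF i] in auto)
        thus ?thesis using p_sum[OF i] by simp
      qed
      finally show "(\<Sum>z=1..c. ennreal (p i z) * ennreal (eps_s\<^sup>2)) = ennreal (eps_s\<^sup>2)" by simp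
    qed
    hence "ennreal K * ((\<Sum>i\<in>H. ennreal (eps\<^sup>2)) + (\<Sum>i\<in>H. \<Sum>z=1..c. ennreal (p i z) * ennreal (eps_s\<^sup>2)))
       = ennreal (K * (real (card H) * eps\<^sup>2 + real (card H) * eps_s\<^sup>2))"
      by (simp add: ennreal_of_nat_eq_real_of_nat ennreal_mult[symmetric] K0 ennreal_plus[symmetric] del: ennreal_plus)
    also have "K * (real (card H) * eps\<^sup>2 + real (card H) * eps_s\<^sup>2) = 2 * real (n - f) * (eps\<^sup>2 + eps_s\<^sup>2)"
      unfolding K_def using cHpos by (simp add: field_simps)
    finally show ?thesis .
  qed
  finally show "(\<integral>\<^sup>+ \<omega>. ennreal (trimmed_loss n f (g \<omega>) (U \<omega>) (m \<omega>)) \<partial>M)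
                \<le> ennreal (2 * real (n - f) * (eps\<^sup>2 + eps_s\<^sup>2))" .
qed

end
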